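(* Let $d\ge2$. There exists a constant $C<\infty$ depending only on $d$ such that for all Lebesgue measurable $E_1,E_2,E_3\subset\mathbb R^d$ of finite measure and all $k_1,k_2,k_3\in\mathbb Z$ with $|E'_{j,k_j}|>0$ for each $j$, $$\mathcal T(E_{1,k_1},E_{2,k_2},E_{3,k_3})\le C\,\theta\,\prod_{j=1}^3|E_{j,k_j}|^{2/3},$$ where $$\theta=\min_{m\ne n}2^{-|k_m-k_n|/3}\cdot\min_{\mu\ne\nu}\big(|E'_{\mu,k_\mu}|/|E'_{\nu,k_\nu}|\big)^{1/3},$$ the minima being over $m\ne n\in\{1,2,3\}$ and $\mu\ne\nu\in\{1,2,3\}$.
   Context: $\mathcal T(A_1,A_2,A_3)=\int\int\mathbf 1_{A_1}(x_1)\mathbf 1_{A_2}(x_2)\mathbf 1_{A_3}(-x_1-x_2)\,dx_1dx_2$. Write $x=(x',t)\in\mathbb R^{d-1}\times\mathbb R$, $\pi(x',t)=x'$, and $h_j(x')=|\{t\in\mathbb R:(x',t)\in E_j\}|$ (one-dimensional measure). For $k\in\mathbb Z$: $E'_{j,k}=\{x'\in\mathbb R^{d-1}:2^k\le h_j(x')<2^{k+1}\}$ and $E_{j,k}=E_j\cap\pi^{-1}(E'_{j,k})$. *)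

theory Defs
  imports "HOL-Analysis.Analysis"
begin

text \<open>R^d is modelled as 'a \<times> real with 'a a Euclidean space of dimension d-1 \<ge> 1.\<close>

definition trilin :: "('a::euclidean_space \<times> real) set \<Rightarrow> ('a \<times> real) set \<Rightarrow> ('a \<times> real) set \<Rightarrow> ennreal" where
  "trilin A1 A2 A3 = (\<integral>\<^sup>+ x1. (\<integral>\<^sup>+ x2. indicator A1 x1 * indicator A2 x2 * indicator A3 (- x1 - x2) \<partial>lebesgue) \<partial>lebesgue)"

definition fiber_len :: "('a::euclidean_space \<times> real) set \<Rightarrow> 'a \<Rightarrow> ennreal" where
  "fiber_len E x' = emeasure lebesgue {t::real. (x', t) \<in> E}"

definition layer' :: "('a::euclidean_space \<times> real) set \<Rightarrow> int \<Rightarrow> 'a set" where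
  "layer' E k = {x'. ennreal (2 powr real_of_int k) \<le> fiber_len E x' \<and> fiber_len E x' < ennreal (2 powr real_of_int (k + 1))}"

definition layer :: "('a::euclidean_space \<times> real) set \<Rightarrow> int \<Rightarrow> ('a \<times> real) set" where
  "layer E k = E \<inter> {x. fst x \<in> layer' E k}"

end

theory Submission
  imports Defs
begin

lemma lborel_reflect_eq:
  fixes u :: "'b::euclidean_space"
  shows "(lborel::'b measure) = distr lborel borel (\<lambda>x. - u - x)"
proof -
  have "(lborel::'b measure) = density (distr lborel borel (\<lambda>x. -u + (-1) *\<^sub>R x)) (\<lambda>_. \<bar>-1::real\<bar>^DIM('b))"
    by (rule lborel_affine) simp
  then show ?thesis by (simp add: density_1)
qed

lemma nn_integral_reflect:
  fixes u :: "'b::euclidean_space" and f :: "'b \<Rightarrow> ennreal"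
  assumes [measurable]: "f \<in> borel_measurable borel"
  shows "(\<integral>\<^sup>+v. f (- u - v) \<partial>lborel) = (\<integral>\<^sup>+v. f v \<partial>lborel)"
proof -
  have "(\<integral>\<^sup>+v. f v \<partial>lborel) = (\<integral>\<^sup>+v. f v \<partial>(distr lborel borel (\<lambda>x. - u - x)))"
    by (subst lborel_reflect_eq[of u, symmetric]) (rule refl)
  also have "\<dots> = (\<integral>\<^sup>+v. f (- u - v) \<partial>lborel)"
    by (subst nn_integral_distr) auto
  finally show ?thesis by simp
qed

lemma nn_integral_reflect':
  fixes u :: "'b::euclidean_space" and f :: "'b \<Rightarrow> ennreal"
  assumes [measurable]: "f \<in> borel_measurable borel"
  shows "(\<integral>\<^sup>+v. f (- v - u) \<partial>lborel) = (\<integral>\<^sup>+v. f v \<partial>lborel)"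
proof -
  have e: "\<And>v. - v - u = - u - (v::'b)" by (simp add: algebra_simps)
  show ?thesis using nn_integral_reflect[OF assms, of u] by (simp only: e)
qed

lemma emeasure_reflect:
  fixes u :: "'b::euclidean_space"
  assumes [measurable]: "A \<in> sets borel"
  shows "emeasure lborel {v. - u - v \<in> A} = emeasure lborel A"
proof -
  have m: "{v. - u - v \<in> A} \<in> sets lborel" by measurable
  have "emeasure lborel {v. - u - v \<in> A} = (\<integral>\<^sup>+v. indicator {v. - u - v \<in> A} v \<partial>lborel)"
    using m by simp
  also have "\<dots> = (\<integral>\<^sup>+v. indicator A (- u - v) \<partial>lborel)"
    by (intro nn_integral_cong) (auto simp: indicator_def)
  also have "\<dots> = (\<integral>\<^sup>+v. indicator A v \<partial>lborel)"
    by (rule nn_integral_reflect) auto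
  finally show ?thesis by simp
qed

lemma AE_reflect:
  fixes u :: "'b::euclidean_space"
  assumes "AE y in lborel. P y"
  shows "AE v in lborel. P (- u - v)"
proof -
  from assms obtain N where N: "{y \<in> space lborel. \<not> P y} \<subseteq> N" "emeasure lborel N = 0" "N \<in> sets lborel"
    by (auto elim!: AE_E)
  have [measurable]: "N \<in> sets borel" using N by simp
  show ?thesis
  proof (rule AE_I[where N="{v. - u - v \<in> N}"])
    show "{x \<in> space lborel. \<not> P (- u - x)} \<subseteq> {v. - u - v \<in> N}" using N by auto
    show "emeasure lborel {v. - u - v \<in> N} = 0" using N emeasure_reflect[of N u] by simp
    show "{v. - u - v \<in> N} \<in> sets lborel" by simp
  qed
qed

lemma tri_bound:
  fixes A1 A2 A3 :: "'b::euclidean_space set"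
  assumes [measurable]: "A1 \<in> sets borel" "A2 \<in> sets borel" "A3 \<in> sets borel"
  defines "T \<equiv> (\<integral>\<^sup>+u. \<integral>\<^sup>+v. indicator A1 u * indicator A2 v * indicator A3 (- u - v) \<partial>lborel \<partial>lborel)"
  shows "T \<le> emeasure lborel A1 * emeasure lborel A2"
    and "T \<le> emeasure lborel A1 * emeasure lborel A3"
    and "T \<le> emeasure lborel A2 * emeasure lborel A3"
proof -
  have "T \<le> (\<integral>\<^sup>+u. \<integral>\<^sup>+v. indicator A1 u * indicator A2 v \<partial>lborel \<partial>lborel)"
    unfolding T_def by (intro nn_integral_mono) (auto simp: indicator_def)
  also have "\<dots> = (\<integral>\<^sup>+u. indicator A1 u * emeasure lborel A2 \<partial>lborel)"
    by (subst nn_integral_cmult) auto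
  also have "\<dots> = emeasure lborel A1 * emeasure lborel A2"
    by (subst nn_integral_multc) auto
  finally show "T \<le> emeasure lborel A1 * emeasure lborel A2" .
next
  have "T \<le> (\<integral>\<^sup>+u. \<integral>\<^sup>+v. indicator A1 u * indicator A3 (- u - v) \<partial>lborel \<partial>lborel)"
    unfolding T_def by (intro nn_integral_mono) (auto simp: indicator_def)
  also have "\<dots> = (\<integral>\<^sup>+u. indicator A1 u * (\<integral>\<^sup>+v. indicator A3 (- u - v) \<partial>lborel) \<partial>lborel)"
    by (subst nn_integral_cmult) auto
  also have "\<dots> = (\<integral>\<^sup>+u. indicator A1 u * emeasure lborel A3 \<partial>lborel)"
    by (subst nn_integral_reflect) auto
  also have "\<dots> = emeasure lborel A1 * emeasure lborel A3"
    by (subst nn_integral_multc) auto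
  finally show "T \<le> emeasure lborel A1 * emeasure lborel A3" .
next
  have "T = (\<integral>\<^sup>+v. \<integral>\<^sup>+u. indicator A1 u * indicator A2 v * indicator A3 (- u - v) \<partial>lborel \<partial>lborel)"
    unfolding T_def
    by (rule lborel_pair.Fubini[symmetric, where f="\<lambda>(u,v). indicator A1 u * indicator A2 v * indicator A3 (- u - v)", simplified]) measurable
  also have "\<dots> \<le> (\<integral>\<^sup>+v. \<integral>\<^sup>+u. indicator A2 v * indicator A3 (- u - v) \<partial>lborel \<partial>lborel)"
    by (intro nn_integral_mono) (auto simp: indicator_def)
  also have "\<dots> = (\<integral>\<^sup>+v. indicator A2 v * (\<integral>\<^sup>+u. indicator A3 (- u - v) \<partial>lborel) \<partial>lborel)"
    by (subst nn_integral_cmult) auto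
  also have "\<dots> = (\<integral>\<^sup>+v. indicator A2 v * emeasure lborel A3 \<partial>lborel)"
    by (subst nn_integral_reflect') auto
  also have "\<dots> = emeasure lborel A2 * emeasure lborel A3"
    by (subst nn_integral_multc) auto
  finally show "T \<le> emeasure lborel A2 * emeasure lborel A3" .
qed

lemma pair_int:
  fixes f :: "('a::euclidean_space \<times> 'b::euclidean_space) \<Rightarrow> ennreal"
  assumes "f \<in> borel_measurable (lborel \<Otimes>\<^sub>M lborel)"
  shows "integral\<^sup>N (lborel \<Otimes>\<^sub>M lborel) f = (\<integral>\<^sup>+y. \<integral>\<^sup>+t. f (y,t) \<partial>lborel \<partial>lborel)"
  using lborel.nn_integral_fst[OF assms] by simp

lemma T_decomp:
  fixes G1 G2 G3 :: "('a::euclidean_space \<times> real) set"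
  assumes [measurable]: "G1 \<in> sets (borel \<Otimes>\<^sub>M borel)" "G2 \<in> sets (borel \<Otimes>\<^sub>M borel)" "G3 \<in> sets (borel \<Otimes>\<^sub>M borel)"
  shows "(\<integral>\<^sup>+x1. \<integral>\<^sup>+x2. (indicator G1 x1 * indicator G2 x2 * indicator G3 (-x1-x2) :: ennreal) \<partial>lborel \<partial>lborel)
   = (\<integral>\<^sup>+y1. \<integral>\<^sup>+y2. (\<integral>\<^sup>+t1. \<integral>\<^sup>+t2. indicator (Pair y1 -` G1) t1 * indicator (Pair y2 -` G2) t2
        * indicator (Pair (-y1-y2) -` G3) (-t1-t2) \<partial>lborel \<partial>lborel) \<partial>lborel \<partial>lborel)"
proof -
  have "(\<integral>\<^sup>+x1. \<integral>\<^sup>+x2. (indicator G1 x1 * indicator G2 x2 * indicator G3 (-x1-x2) :: ennreal) \<partial>lborel \<partial>lborel)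
     = (\<integral>\<^sup>+x1. \<integral>\<^sup>+x2. (indicator G1 x1 * indicator G2 x2 * indicator G3 (-fst x1-fst x2, -snd x1 - snd x2) :: ennreal) \<partial>(lborel \<Otimes>\<^sub>M lborel) \<partial>(lborel \<Otimes>\<^sub>M lborel))"
    by (simp add: lborel_prod minus_prod_def)
  also have "\<dots> = (\<integral>\<^sup>+y1. \<integral>\<^sup>+t1. (\<integral>\<^sup>+x2. (indicator G1 (y1,t1) * indicator G2 x2 * indicator G3 (-y1-fst x2, -t1 - snd x2) :: ennreal) \<partial>(lborel \<Otimes>\<^sub>M lborel)) \<partial>lborel \<partial>lborel)"
    by (subst pair_int) (simp_all, measurable)
  also have "\<dots> = (\<integral>\<^sup>+y1. \<integral>\<^sup>+t1. \<integral>\<^sup>+y2. \<integral>\<^sup>+t2. (indicator G1 (y1,t1) * indicator G2 (y2,t2) * indicator G3 (-y1-y2, -t1 - t2) :: ennreal) \<partial>lborel \<partial>lborel \<partial>lborel \<partial>lborel)"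
    by (intro nn_integral_cong, subst pair_int) (simp_all, measurable)
  also have "\<dots> = (\<integral>\<^sup>+y1. \<integral>\<^sup>+y2. \<integral>\<^sup>+t1. \<integral>\<^sup>+t2. (indicator G1 (y1,t1) * indicator G2 (y2,t2) * indicator G3 (-y1-y2, -t1 - t2) :: ennreal) \<partial>lborel \<partial>lborel \<partial>lborel \<partial>lborel)"
  proof (intro nn_integral_cong)
    fix y1 :: 'a
    show "(\<integral>\<^sup>+t1. \<integral>\<^sup>+y2. \<integral>\<^sup>+t2. (indicator G1 (y1,t1) * indicator G2 (y2,t2) * indicator G3 (-y1-y2, -t1 - t2) :: ennreal) \<partial>lborel \<partial>lborel \<partial>lborel)
       = (\<integral>\<^sup>+y2. \<integral>\<^sup>+t1. \<integral>\<^sup>+t2. (indicator G1 (y1,t1) * indicator G2 (y2,t2) * indicator G3 (-y1-y2, -t1 - t2) :: ennreal) \<partial>lborel \<partial>lborel \<partial>lborel)"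
      by (rule lborel_pair.Fubini[symmetric, where f="\<lambda>(t1,y2). \<integral>\<^sup>+t2. (indicator G1 (y1,t1) * indicator G2 (y2,t2) * indicator G3 (-y1-y2, -t1 - t2) :: ennreal) \<partial>lborel", simplified]) measurable
  qed
  also have "\<dots> = (\<integral>\<^sup>+y1. \<integral>\<^sup>+y2. (\<integral>\<^sup>+t1. \<integral>\<^sup>+t2. indicator (Pair y1 -` G1) t1 * indicator (Pair y2 -` G2) t2
        * indicator (Pair (-y1-y2) -` G3) (-t1-t2) \<partial>lborel \<partial>lborel) \<partial>lborel \<partial>lborel)"
    by (intro nn_integral_cong) (simp add: indicator_def)
  finally show ?thesis .
qed

lemma ennreal_combo:
  fixes \<phi> :: ennreal and F :: "nat \<Rightarrow> ennreal" and c :: "nat \<Rightarrow> real"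
  assumes "\<phi> \<le> F 1 * F 2" "\<phi> \<le> F 1 * F 3" "\<phi> \<le> F 2 * F 3"
    and F: "\<And>l. l \<in> {1,2,3} \<Longrightarrow> F l \<le> (if b l then ennreal (c l) else 0)"
    and c: "\<And>l. c l \<ge> 0"
    and ij: "i \<in> {1,2,3}" "j \<in> {1,2,3}" "i \<noteq> j"
  shows "\<phi> \<le> (if b 1 \<and> b 2 \<and> b 3 then ennreal (c i * c j) else 0)"
proof -
  have pq: "\<phi> \<le> F p * F q" if "p \<in> {1,2,3}" "q \<in> {1,2,3}" "p \<noteq> q" for p q
  proof -
    from that have "(p = 1 \<and> q = 2) \<or> (p = 2 \<and> q = 1) \<or> (p = 1 \<and> q = 3) \<or> (p = 3 \<and> q = 1) \<or> (p = 2 \<and> q = 3) \<or> (p = 3 \<and> q = 2)"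
      by auto
    then show ?thesis using assms(1-3) by (elim disjE) (simp_all only: mult.commute)
  qed
  show ?thesis
  proof (cases "b 1 \<and> b 2 \<and> b 3")
    case True
    have bi: "b i" "b j" using True ij by auto
    have "\<phi> \<le> F i * F j" using pq ij by blast
    also have "\<dots> \<le> ennreal (c i) * ennreal (c j)"
    proof (rule mult_mono)
      show "F i \<le> ennreal (c i)" using F[OF ij(1)] bi by simp
      show "F j \<le> ennreal (c j)" using F[OF ij(2)] bi by simp
    qed auto
    also have "\<dots> = ennreal (c i * c j)" using c by (simp add: ennreal_mult)
    finally show ?thesis using True by simp
  next
    case False
    then obtain l where l: "l \<in> {1,2,3::nat}" "\<not> b l" by auto
    then have Fl: "F l = 0" using F[of l] by simp
    define q :: nat where "q = (if l = 1 then 2 else 1)"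
    have q: "q \<in> {1,2,3}" "q \<noteq> l" unfolding q_def by auto
    have "\<phi> \<le> F l * F q" using pq[OF l(1) q(1)] q(2) by simp
    then show ?thesis using Fl False by simp
  qed
qed

lemma tri_bound_pair:
  fixes S :: "nat \<Rightarrow> 'b::euclidean_space set"
  assumes [measurable]: "S 1 \<in> sets borel" "S 2 \<in> sets borel" "S 3 \<in> sets borel"
    and mn: "m \<in> {1,2,3}" "n \<in> {1,2,3}" "m \<noteq> n"
  shows "(\<integral>\<^sup>+u. \<integral>\<^sup>+v. indicator (S 1) u * indicator (S 2) v * indicator (S 3) (- u - v) \<partial>lborel \<partial>lborel)
     \<le> emeasure lborel (S m) * emeasure lborel (S n)"
proof -
  note tb = tri_bound[OF assms(1-3)]
  from mn have "(m = 1 \<and> n = 2) \<or> (m = 2 \<and> n = 1) \<or> (m = 1 \<and> n = 3) \<or> (m = 3 \<and> n = 1) \<or> (m = 2 \<and> n = 3) \<or> (m = 3 \<and> n = 2)"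
    by auto
  then show ?thesis using tb by (elim disjE) (simp_all only: mult.commute)
qed

lemma main_bound:
  fixes G :: "nat \<Rightarrow> ('a::euclidean_space \<times> real) set" and S :: "nat \<Rightarrow> 'a set" and c :: "nat \<Rightarrow> real"
  assumes G[measurable]: "G 1 \<in> sets (borel \<Otimes>\<^sub>M borel)" "G 2 \<in> sets (borel \<Otimes>\<^sub>M borel)" "G 3 \<in> sets (borel \<Otimes>\<^sub>M borel)"
    and S[measurable]: "S 1 \<in> sets borel" "S 2 \<in> sets borel" "S 3 \<in> sets borel"
    and c: "\<And>l. c l \<ge> 0"
    and fib: "\<And>l. l \<in> {1,2,3} \<Longrightarrow> AE y in lborel. emeasure lborel (Pair y -` G l) \<le> ennreal (c l) * indicator (S l) y"
    and ij: "i \<in> {1,2,3}" "j \<in> {1,2,3}" "i \<noteq> j"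
    and mn: "m \<in> {1,2,3}" "n \<in> {1,2,3}" "m \<noteq> n"
  shows "(\<integral>\<^sup>+x1. \<integral>\<^sup>+x2. (indicator (G 1) x1 * indicator (G 2) x2 * indicator (G 3) (-x1-x2) :: ennreal) \<partial>lborel \<partial>lborel)
     \<le> ennreal (c i * c j) * emeasure lborel (S m) * emeasure lborel (S n)"
proof -
  define f where "f l y = emeasure lborel (Pair y -` G l)" for l y
  define \<Phi> where "\<Phi> y1 y2 = (\<integral>\<^sup>+t1. \<integral>\<^sup>+t2. indicator (Pair y1 -` G 1) t1 * indicator (Pair y2 -` G 2) t2
        * indicator (Pair (-y1-y2) -` G 3) (-t1-t2) \<partial>lborel \<partial>lborel)" for y1 y2 :: 'a
  define B where "B y1 y2 = ennreal (c i * c j) * (indicator (S 1) y1 * indicator (S 2) y2 * indicator (S 3) (-y1-y2))" for y1 y2 :: 'a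
  have fibsets: "Pair y -` G l \<in> sets borel" if "l \<in> {1,2,3}" for y l
    using that sets_Pair1[OF G(1)] sets_Pair1[OF G(2)] sets_Pair1[OF G(3)] by auto
  have pt: "\<Phi> y1 y2 \<le> B y1 y2"
    if h1: "f 1 y1 \<le> ennreal (c 1) * indicator (S 1) y1" and h2: "f 2 y2 \<le> ennreal (c 2) * indicator (S 2) y2"
      and h3: "f 3 (-y1-y2) \<le> ennreal (c 3) * indicator (S 3) (-y1-y2)" for y1 y2
  proof -
    define F where "F l = f l (if l = 1 then y1 else if l = 2 then y2 else -y1-y2)" for l
    define b where "b l = ((if l = 1 then y1 else if l = 2 then y2 else -y1-y2) \<in> S l)" for l
    have tb: "\<Phi> y1 y2 \<le> F 1 * F 2" "\<Phi> y1 y2 \<le> F 1 * F 3" "\<Phi> y1 y2 \<le> F 2 * F 3"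
      using tri_bound[OF fibsets[of 1 y1] fibsets[of 2 y2] fibsets[of 3 "-y1-y2"]]
      unfolding \<Phi>_def F_def f_def by auto
    have Fb: "F l \<le> (if b l then ennreal (c l) else 0)" if "l \<in> {1,2,3}" for l
      using that h1 h2 h3 unfolding F_def b_def by (auto simp: indicator_def)
    have "\<Phi> y1 y2 \<le> (if b 1 \<and> b 2 \<and> b 3 then ennreal (c i * c j) else 0)"
      by (rule ennreal_combo[OF tb Fb c ij])
    then show ?thesis unfolding B_def b_def by (auto simp: indicator_def)
  qed
  have "(\<integral>\<^sup>+x1. \<integral>\<^sup>+x2. (indicator (G 1) x1 * indicator (G 2) x2 * indicator (G 3) (-x1-x2) :: ennreal) \<partial>lborel \<partial>lborel)
     = (\<integral>\<^sup>+y1. \<integral>\<^sup>+y2. \<Phi> y1 y2 \<partial>lborel \<partial>lborel)"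
    unfolding \<Phi>_def by (rule T_decomp) (use G in auto)
  also have "\<dots> \<le> (\<integral>\<^sup>+y1. \<integral>\<^sup>+y2. B y1 y2 \<partial>lborel \<partial>lborel)"
  proof (rule nn_integral_mono_AE)
    have A1: "AE y1 in lborel. f 1 y1 \<le> ennreal (c 1) * indicator (S 1) y1" using fib[of 1] by (simp add: f_def)
    show "AE y1 in lborel. (\<integral>\<^sup>+y2. \<Phi> y1 y2 \<partial>lborel) \<le> (\<integral>\<^sup>+y2. B y1 y2 \<partial>lborel)"
      using A1
    proof (rule AE_mp, intro AE_I2 impI)
      fix y1 assume h1: "f 1 y1 \<le> ennreal (c 1) * indicator (S 1) y1"
      have A2: "AE y2 in lborel. f 2 y2 \<le> ennreal (c 2) * indicator (S 2) y2" using fib[of 2] by (simp add: f_def)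
      have A3: "AE y2 in lborel. f 3 (-y1-y2) \<le> ennreal (c 3) * indicator (S 3) (-y1-y2)"
        using AE_reflect[OF fib[of 3], of y1] by (simp add: f_def)
      show "(\<integral>\<^sup>+y2. \<Phi> y1 y2 \<partial>lborel) \<le> (\<integral>\<^sup>+y2. B y1 y2 \<partial>lborel)"
        by (rule nn_integral_mono_AE) (use A2 A3 in \<open>eventually_elim\<close>, use h1 pt in blast)
    qed
  qed
  also have "\<dots> = ennreal (c i * c j) * (\<integral>\<^sup>+u. \<integral>\<^sup>+v. indicator (S 1) u * indicator (S 2) v * indicator (S 3) (- u - v) \<partial>lborel \<partial>lborel)"
  proof -
    have "(\<integral>\<^sup>+y1. \<integral>\<^sup>+y2. B y1 y2 \<partial>lborel \<partial>lborel) = (\<integral>\<^sup>+y1. ennreal (c i * c j) * (\<integral>\<^sup>+v. indicator (S 1) y1 * indicator (S 2) v * indicator (S 3) (- y1 - v) \<partial>lborel) \<partial>lborel)"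
      unfolding B_def by (intro nn_integral_cong nn_integral_cmult) measurable
    also have "\<dots> = ennreal (c i * c j) * (\<integral>\<^sup>+u. \<integral>\<^sup>+v. indicator (S 1) u * indicator (S 2) v * indicator (S 3) (- u - v) \<partial>lborel \<partial>lborel)"
      by (rule nn_integral_cmult) measurable
    finally show ?thesis .
  qed
  also have "\<dots> \<le> ennreal (c i * c j) * (emeasure lborel (S m) * emeasure lborel (S n))"
    using tri_bound_pair[OF S mn] by (rule mult_left_mono) simp
  finally show ?thesis by (simp only: mult.assoc)
qed

lemma sets_lp: "A \<in> sets (borel :: ('a::euclidean_space \<times> 'b::euclidean_space) measure) \<Longrightarrow> A \<in> sets (lborel \<Otimes>\<^sub>M lborel)"
  by (metis lborel_prod sets_lborel)

lemma layer_construct: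
  fixes E :: "('a::euclidean_space \<times> real) set" and k :: int
  assumes E: "E \<in> sets lebesgue" "emeasure lebesgue E < \<infinity>"
    and pos: "emeasure lebesgue (layer' E k) > 0"
  shows "\<exists>G S. G \<in> sets (borel \<Otimes>\<^sub>M borel) \<and> layer E k \<subseteq> G \<and> S \<in> sets borel
     \<and> emeasure lborel S = emeasure lebesgue (layer' E k)
     \<and> (AE y in lborel. emeasure lborel (Pair y -` G) \<le> ennreal (2 * 2 powr real_of_int k) * indicator S y)
     \<and> layer E k \<in> sets lebesgue
     \<and> ennreal (2 powr real_of_int k) * emeasure lebesgue (layer' E k) \<le> emeasure lebesgue (layer E k)
     \<and> emeasure lebesgue (layer E k) < \<infinity>"
proof -
  define a where "a = 2 powr real_of_int k"
  define B where "B = layer' E k"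
  define L where "L = layer E k"
  have apos: "a > 0" by (simp add: a_def)
  have B: "B \<in> sets lebesgue"
    using pos emeasure_notin_sets[of B lebesgue] unfolding B_def by force
  have a2: "2 powr real_of_int (k + 1) = 2 * a" by (simp add: a_def powr_add)
  have hB: "{t. (y,t) \<in> E} \<in> sets lebesgue \<and> ennreal a \<le> emeasure lebesgue {t. (y,t) \<in> E}
       \<and> emeasure lebesgue {t. (y,t) \<in> E} < ennreal (2 * a)" if "y \<in> B" for y
  proof -
    have 1: "ennreal a \<le> emeasure lebesgue {t. (y,t) \<in> E}" "emeasure lebesgue {t. (y,t) \<in> E} < ennreal (2 * a)"
      using that a2 unfolding B_def layer'_def fiber_len_def a_def by auto
    have "emeasure lebesgue {t. (y,t) \<in> E} \<noteq> 0" using 1(1) apos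
      by (metis ennreal_eq_0_iff linorder_not_le not_le_imp_less order_less_le_trans zero_less_iff_neq_zero ennreal_less_zero_iff)
    then have "{t. (y,t) \<in> E} \<in> sets lebesgue" using emeasure_notin_sets by blast
    with 1 show ?thesis by auto
  qed
  have Lfib: "Pair y -` L = (if y \<in> B then {t. (y,t) \<in> E} else {})" for y
    unfolding L_def B_def layer_def by auto
  obtain S0 N N' where SN: "B = S0 \<union> N" "N \<subseteq> N'" "N' \<in> null_sets lborel" "S0 \<in> sets lborel"
    using B by (rule sets_completionE)
  have "N' \<times> (UNIV :: real set) \<in> null_sets (lborel \<Otimes>\<^sub>M lborel)"
    using SN(3) by (intro lborel.times_in_null_sets1) auto
  then have N'U: "N' \<times> (UNIV :: real set) \<in> null_sets lborel" by (simp add: lborel_prod borel_prod)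
  have "S0 \<times> (UNIV :: real set) \<in> sets (lborel \<Otimes>\<^sub>M lborel)" using SN(4) by auto
  then have S0U: "S0 \<times> (UNIV :: real set) \<in> sets lborel" by (metis lborel_prod)
  have "{x::'a \<times> real. fst x \<in> B} \<in> sets lebesgue"
    by (rule sets_completionI[of _ "S0 \<times> UNIV" "N \<times> UNIV" "N' \<times> UNIV"]) (use SN N'U S0U in auto)
  then have Lmeas: "L \<in> sets lebesgue" unfolding L_def layer_def B_def using E(1) by auto
  have Lfin: "emeasure lebesgue L < \<infinity>"
    using E(2) emeasure_mono[of L E lebesgue] E(1) unfolding L_def layer_def by (meson Int_lower1 le_less_trans)
  obtain G0 where G0: "G0 \<in> sets lborel" "L \<subseteq> G0" "emeasure lebesgue L = emeasure lborel G0"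
    using completion_upper[OF Lmeas] by blast
  define H where "H = main_part lborel L"
  have H: "H \<in> sets lborel" "H \<subseteq> L" "emeasure lebesgue L = emeasure lborel H"
    unfolding H_def
    using main_part_sets[OF Lmeas] main_part_null_part_Un[OF Lmeas] emeasure_completion[OF Lmeas] by blast+
  have "H \<subseteq> G0" using H G0 by auto
  have Z0: "emeasure lborel (G0 - H) = 0"
    using emeasure_Diff[of lborel H G0] H G0 Lfin \<open>H \<subseteq> G0\<close> by simp
  have Zs: "G0 - H \<in> sets (lborel \<Otimes>\<^sub>M lborel)" using H G0 by (intro sets_lp) auto
  have "emeasure (lborel \<Otimes>\<^sub>M lborel) (G0 - H) = (\<integral>\<^sup>+y. emeasure lborel (Pair y -` (G0 - H)) \<partial>lborel)"
    by (rule lborel.emeasure_pair_measure_alt[OF Zs])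
  then have "(\<integral>\<^sup>+y. emeasure lborel (Pair y -` (G0 - H)) \<partial>lborel) = 0" using Z0 by (simp only: lborel_prod)
  then have AEZ: "AE y in lborel. emeasure lborel (Pair y -` (G0 - H)) = 0"
    by (subst (asm) nn_integral_0_iff_AE) (use lborel.measurable_emeasure_Pair[OF Zs] in auto)
  have G0s1: "G0 \<in> sets (lborel \<Otimes>\<^sub>M lborel)" by (rule sets_lp) (use G0 in simp)
  have G0s2: "H \<in> sets (lborel \<Otimes>\<^sub>M lborel)" by (rule sets_lp) (use H in simp)
  note G0s = G0s1 G0s2
  have AEGH: "AE y in lborel. emeasure lborel (Pair y -` G0) = emeasure lborel (Pair y -` H)"
    using AEZ
  proof eventually_elim
    case (elim y)
    have "Pair y -` G0 = Pair y -` H \<union> Pair y -` (G0 - H)" using \<open>H \<subseteq> G0\<close> by auto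
    moreover have "Pair y -` (G0 - H) \<in> null_sets lborel"
      using elim sets_Pair1[OF Zs] by auto
    ultimately show ?case using emeasure_Un_null_set sets_Pair1[OF G0s(2)] by metis
  qed
  have Hup: "emeasure lborel (Pair y -` H) \<le> ennreal (2 * a) * indicator B y" for y
  proof (cases "y \<in> B")
    case True
    have Hy: "Pair y -` H \<in> sets lborel" using sets_Pair1[OF G0s(2)] by simp
    have "emeasure lborel (Pair y -` H) = emeasure lebesgue (Pair y -` H)" using Hy by simp
    also have "\<dots> \<le> emeasure lebesgue {t. (y,t) \<in> E}"
      using hB[OF True] Hy H(2) Lfib[of y] True by (intro emeasure_mono) auto
    also have "\<dots> \<le> ennreal (2 * a)" using hB[OF True] by (meson less_imp_le)
    finally show ?thesis using True by simp
  next
    case False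
    then have "Pair y -` H = {}" using H(2) Lfib[of y] by auto
    then show ?thesis by simp
  qed
  have G0low: "ennreal a \<le> emeasure lborel (Pair y -` G0)" if "y \<in> B" for y
  proof -
    have Gy: "Pair y -` G0 \<in> sets lborel" using sets_Pair1[OF G0s(1)] by simp
    have "ennreal a \<le> emeasure lebesgue {t. (y,t) \<in> E}" using hB[OF that] by blast
    also have "\<dots> \<le> emeasure lebesgue (Pair y -` G0)"
      using hB[OF that] Gy G0(2) Lfib[of y] that by (intro emeasure_mono) auto
    also have "\<dots> = emeasure lborel (Pair y -` G0)" using Gy by simp
    finally show ?thesis .
  qed
  obtain S where S: "S \<in> sets lborel" "B \<subseteq> S" "emeasure lebesgue B = emeasure lborel S"
    using completion_upper[OF B] by blast
  have AEup: "AE y in lborel. emeasure lborel (Pair y -` G0) \<le> ennreal (2 * a) * indicator S y"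
    using AEGH
  proof eventually_elim
    case (elim y)
    have "ennreal (2 * a) * indicator B y \<le> ennreal (2 * a) * indicator S y"
      using S(2) by (intro mult_left_mono) (auto simp: indicator_def)
    then show ?case using elim Hup[of y] by simp
  qed
  have "emeasure lebesgue L = emeasure (lborel \<Otimes>\<^sub>M lborel) H" using H by (simp only: lborel_prod)
  also have "\<dots> = (\<integral>\<^sup>+y. emeasure lborel (Pair y -` H) \<partial>lborel)"
    by (rule lborel.emeasure_pair_measure_alt[OF G0s(2)])
  also have "\<dots> \<ge> (\<integral>\<^sup>+y. ennreal a * indicator B y \<partial>lborel)"
    using AEGH
  proof (intro nn_integral_mono_AE, eventually_elim)
    case (elim y)
    then show ?case using G0low[of y] by (auto simp: indicator_def)
  qed
  moreover have "(\<integral>\<^sup>+y. ennreal a * indicator B y \<partial>lborel) = ennreal a * emeasure lebesgue B"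
    using nn_integral_completion[of lborel "\<lambda>y. ennreal a * indicator B y"] nn_integral_cmult_indicator[OF B, of "ennreal a"]
    by simp
  ultimately have low: "ennreal a * emeasure lebesgue B \<le> emeasure lebesgue L" by simp
  show ?thesis
  proof (intro exI conjI)
    show "G0 \<in> sets (borel \<Otimes>\<^sub>M borel)" using G0(1) by (metis borel_prod sets_lborel)
    show "S \<in> sets borel" using S by simp
  qed (use G0 S AEup Lmeas low Lfin in \<open>auto simp: L_def B_def a_def\<close>)
qed

lemma alg_pick:
  fixes x :: "nat \<Rightarrow> real"
  assumes uv: "u \<in> {1,2,3}" "v \<in> {1,2,3}"
  shows "\<exists>i\<in>{1,2,3}. \<exists>j\<in>{1,2,3}. i \<noteq> j \<and> x i + x j \<le> (x u - x v)/3 + 2/3*(x 1 + x 2 + x 3)"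
proof -
  have "x 1 + x 2 \<le> (x u - x v)/3 + 2/3*(x 1 + x 2 + x 3) \<or> x 1 + x 3 \<le> (x u - x v)/3 + 2/3*(x 1 + x 2 + x 3)
      \<or> x 2 + x 3 \<le> (x u - x v)/3 + 2/3*(x 1 + x 2 + x 3)"
  proof -
    have cu: "u = 1 \<or> u = 2 \<or> u = 3" and cv: "v = 1 \<or> v = 2 \<or> v = 3" using uv by auto
    show ?thesis
    proof (rule ccontr)
      assume "\<not> ?thesis"
      then have h: "x 1 + x 2 > (x u - x v)/3 + 2/3*(x 1 + x 2 + x 3)" "x 1 + x 3 > (x u - x v)/3 + 2/3*(x 1 + x 2 + x 3)"
        "x 2 + x 3 > (x u - x v)/3 + 2/3*(x 1 + x 2 + x 3)" by auto
      have hu: "x u = x 1 \<or> x u = x 2 \<or> x u = x 3" using cu by auto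
      have hv: "x v = x 1 \<or> x v = x 2 \<or> x v = x 3" using cv by auto
      show False
        by (insert hu hv h, elim disjE; simp add: field_simps)
    qed
  qed
  moreover have "(1::nat) \<in> {1,2,3}" "(2::nat) \<in> {1,2,3}" "(3::nat) \<in> {1,2,3}"
    "(1::nat) \<noteq> 2" "(1::nat) \<noteq> 3" "(2::nat) \<noteq> 3" by simp_all
  ultimately show ?thesis by blast
qed

lemma alg_pos:
  fixes z :: "nat \<Rightarrow> real"
  assumes pos: "\<And>l. l \<in> {1,2,3} \<Longrightarrow> z l > 0" and uv: "u \<in> {1,2,3}" "v \<in> {1,2,3}"
  shows "\<exists>i\<in>{1,2,3}. \<exists>j\<in>{1,2,3}. i \<noteq> j \<and> z i * z j \<le> (z u / z v) powr (1/3) * (z 1 * z 2 * z 3) powr (2/3)"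
proof -
  define x where "x l = ln (z l)" for l
  obtain i j where ij: "i \<in> {1,2,3}" "j \<in> {1,2,3}" "i \<noteq> j"
    and le: "x i + x j \<le> (x u - x v)/3 + 2/3*(x 1 + x 2 + x 3)"
    using alg_pick[OF uv, of x] by blast
  have zp: "z 1 > 0" "z 2 > 0" "z 3 > 0" "z i > 0" "z j > 0" "z u > 0" "z v > 0" using pos ij uv by auto
  have "z i * z j = exp (x i + x j)" using zp by (simp add: x_def exp_add)
  also have "\<dots> \<le> exp ((x u - x v)/3 + 2/3*(x 1 + x 2 + x 3))" using le by simp
  also have "\<dots> = (z u / z v) powr (1/3) * (z 1 * z 2 * z 3) powr (2/3)"
  proof -
    have e1: "(z u / z v) powr (1/3) = exp ((x u - x v)/3)"
      using zp by (simp add: powr_def x_def ln_div divide_simps mult.commute)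
    have e2: "(z 1 * z 2 * z 3) powr (2/3) = exp (2/3*(x 1 + x 2 + x 3))"
    proof -
      have p3: "z 1 * z 2 * z 3 > 0" using zp by simp
      have "(z 1 * z 2 * z 3) powr (2/3) = exp (2/3 * ln (z 1 * z 2 * z 3))"
        using p3 zp by (simp add: powr_def)
      also have "ln (z 1 * z 2 * z 3) = x 1 + x 2 + x 3"
        using zp by (simp add: x_def ln_mult)
      finally show ?thesis .
    qed
    show ?thesis by (simp only: e1 e2 exp_add[symmetric])
  qed
  finally show ?thesis using ij by blast
qed

lemma Min_pairs:
  fixes g :: "nat \<Rightarrow> nat \<Rightarrow> real"
  shows "\<exists>p\<in>{1,2,3}. \<exists>q\<in>{1,2,3}. p \<noteq> q \<and> Min {g m n | m n. m \<in> {1,2,3} \<and> n \<in> {1,2,3} \<and> m \<noteq> n} = g p q"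
proof -
  have eq: "{g m n | m n. m \<in> {1,2,3} \<and> n \<in> {1,2,3} \<and> m \<noteq> n} = (\<lambda>(m,n). g m n) ` {(m,n). m \<in> {1,2,3::nat} \<and> n \<in> {1,2,3} \<and> m \<noteq> n}"
    by auto
  have fin: "finite {(m,n). m \<in> {1,2,3::nat} \<and> n \<in> {1,2,3} \<and> m \<noteq> n}"
    by (rule finite_subset[of _ "{1,2,3} \<times> {1,2,3}"]) auto
  have "(1,2) \<in> {(m,n). m \<in> {1,2,3::nat} \<and> n \<in> {1,2,3} \<and> m \<noteq> n}" by simp
  then have ne: "{(m,n). m \<in> {1,2,3::nat} \<and> n \<in> {1,2,3} \<and> m \<noteq> n} \<noteq> {}" by blast
  have "Min ((\<lambda>(m,n). g m n) ` {(m,n). m \<in> {1,2,3::nat} \<and> n \<in> {1,2,3} \<and> m \<noteq> n})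
      \<in> (\<lambda>(m,n). g m n) ` {(m,n). m \<in> {1,2,3::nat} \<and> n \<in> {1,2,3} \<and> m \<noteq> n}"
    using fin ne by (intro Min_in) auto
  then show ?thesis unfolding eq by auto
qed

theorem lemma5p2:
  "\<exists>C::real. \<forall>(E :: nat \<Rightarrow> ('a::euclidean_space \<times> real) set) (k :: nat \<Rightarrow> int).
     (\<forall>j\<in>{1,2,3}. E j \<in> sets lebesgue \<and> emeasure lebesgue (E j) < \<infinity>
                    \<and> emeasure lebesgue (layer' (E j) (k j)) > 0) \<longrightarrow>
     trilin (layer (E 1) (k 1)) (layer (E 2) (k 2)) (layer (E 3) (k 3))
       \<le> ennreal (C *
           (Min {2 powr (- \<bar>real_of_int (k m - k n)\<bar> / 3) | m n. m \<in> {1,2,3} \<and> n \<in> {1,2,3} \<and> m \<noteq> n}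
            * Min {(measure lebesgue (layer' (E \<mu>) (k \<mu>)) / measure lebesgue (layer' (E \<nu>) (k \<nu>))) powr (1/3)
                   | \<mu> \<nu>. \<mu> \<in> {1,2,3} \<and> \<nu> \<in> {1,2,3} \<and> \<mu> \<noteq> \<nu>})
           * (\<Prod>j\<in>{1,2,3}. measure lebesgue (layer (E j) (k j)) powr (2/3)))"
proof (intro exI[of _ 4] allI impI)
  fix E :: "nat \<Rightarrow> ('a::euclidean_space \<times> real) set" and k :: "nat \<Rightarrow> int"
  assume hyp: "\<forall>j\<in>{1,2,3}. E j \<in> sets lebesgue \<and> emeasure lebesgue (E j) < \<infinity>
                    \<and> emeasure lebesgue (layer' (E j) (k j)) > 0"
  define P where "P j G S \<longleftrightarrow> G \<in> sets (borel \<Otimes>\<^sub>M borel) \<and> layer (E j) (k j) \<subseteq> G \<and> S \<in> sets borel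
     \<and> emeasure lborel S = emeasure lebesgue (layer' (E j) (k j))
     \<and> (AE y in lborel. emeasure lborel (Pair y -` G) \<le> ennreal (2 * 2 powr real_of_int (k j)) * indicator S y)
     \<and> layer (E j) (k j) \<in> sets lebesgue
     \<and> ennreal (2 powr real_of_int (k j)) * emeasure lebesgue (layer' (E j) (k j)) \<le> emeasure lebesgue (layer (E j) (k j))
     \<and> emeasure lebesgue (layer (E j) (k j)) < \<infinity>" for j and G :: "('a \<times> real) set" and S :: "'a set"
  have "\<forall>j\<in>{1,2,3}. \<exists>G S. P j G S"
  proof
    fix j :: nat assume "j \<in> {1,2,3}"
    then have "E j \<in> sets lebesgue" "emeasure lebesgue (E j) < \<infinity>" "emeasure lebesgue (layer' (E j) (k j)) > 0"
      using hyp by auto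
    from layer_construct[OF this] show "\<exists>G S. P j G S" unfolding P_def by blast
  qed
  then obtain G where "\<forall>j\<in>{1,2,3}. \<exists>S. P j (G j) S" by (metis bchoice)
  then obtain S where PS: "\<forall>j\<in>{1,2,3}. P j (G j) (S j)" by (metis bchoice)
  define a where "a j = 2 powr real_of_int (k j)" for j
  define b where "b j = measure lebesgue (layer' (E j) (k j))" for j
  define mm where "mm j = measure lebesgue (layer (E j) (k j))" for j
  have F: "a j > 0 \<and> b j > 0 \<and> emeasure lborel (S j) = ennreal (b j) \<and> a j * b j \<le> mm j
     \<and> G j \<in> sets (borel \<Otimes>\<^sub>M borel) \<and> S j \<in> sets borel \<and> layer (E j) (k j) \<subseteq> G j
     \<and> (AE y in lborel. emeasure lborel (Pair y -` G j) \<le> ennreal (2 * a j) * indicator (S j) y)"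
    if j: "j \<in> {1,2,3}" for j
  proof -
    have Pj: "P j (G j) (S j)" using PS j by blast
    have apos: "a j > 0" by (simp add: a_def)
    have hp: "emeasure lebesgue (layer' (E j) (k j)) > 0" using hyp j by auto
    have low: "ennreal (a j) * emeasure lebesgue (layer' (E j) (k j)) \<le> emeasure lebesgue (layer (E j) (k j))"
      and Lfin: "emeasure lebesgue (layer (E j) (k j)) < \<infinity>"
      using Pj unfolding P_def a_def by auto
    have Bfin: "emeasure lebesgue (layer' (E j) (k j)) \<noteq> top"
    proof
      assume "emeasure lebesgue (layer' (E j) (k j)) = top"
      then have "ennreal (a j) * emeasure lebesgue (layer' (E j) (k j)) = top" using apos by (simp add: ennreal_mult_eq_top_iff)
      then show False using low Lfin by (simp add: top_unique)
    qed
    have eB: "emeasure lebesgue (layer' (E j) (k j)) = ennreal (b j)"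
      unfolding b_def using Bfin by (rule emeasure_eq_ennreal_measure)
    have eL: "emeasure lebesgue (layer (E j) (k j)) = ennreal (mm j)"
      unfolding mm_def using Lfin by (intro emeasure_eq_ennreal_measure) simp
    have bpos: "b j > 0" using hp eB by simp
    have "ennreal (a j * b j) \<le> ennreal (mm j)" using low eB eL apos bpos by (simp add: ennreal_mult)
    then have abm: "a j * b j \<le> mm j" by (simp add: mm_def ennreal_le_iff)
    show ?thesis using Pj apos bpos abm eB unfolding P_def a_def by auto
  qed
  have bound: "trilin (layer (E 1) (k 1)) (layer (E 2) (k 2)) (layer (E 3) (k 3)) \<le> ennreal (4 * (a i * a j) * (b m * b n))"
    if ij: "i \<in> {1,2,3}" "j \<in> {1,2,3}" "i \<noteq> j" and mn: "m \<in> {1,2,3}" "n \<in> {1,2,3}" "m \<noteq> n" for i j m n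
  proof -
    have F1: "layer (E 1) (k 1) \<subseteq> G 1" and F2: "layer (E 2) (k 2) \<subseteq> G 2" and F3: "layer (E 3) (k 3) \<subseteq> G 3"
      using F[of 1] F[of 2] F[of 3] by auto
    have "trilin (layer (E 1) (k 1)) (layer (E 2) (k 2)) (layer (E 3) (k 3))
        \<le> (\<integral>\<^sup>+x1. \<integral>\<^sup>+x2. (indicator (G 1) x1 * indicator (G 2) x2 * indicator (G 3) (-x1-x2) :: ennreal) \<partial>lborel \<partial>lborel)"
      unfolding trilin_def nn_integral_completion
      using F1 F2 F3 by (intro nn_integral_mono) (auto simp: indicator_def)
    also have "\<dots> \<le> ennreal ((2 * a i) * (2 * a j)) * emeasure lborel (S m) * emeasure lborel (S n)"
    proof (rule main_bound[where c="\<lambda>l. 2 * a l"])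
      show "G 1 \<in> sets (borel \<Otimes>\<^sub>M borel)" "G 2 \<in> sets (borel \<Otimes>\<^sub>M borel)" "G 3 \<in> sets (borel \<Otimes>\<^sub>M borel)"
        "S 1 \<in> sets borel" "S 2 \<in> sets borel" "S 3 \<in> sets borel"
        using F[of 1] F[of 2] F[of 3] by auto
      show "\<And>l. 0 \<le> 2 * a l" by (simp add: a_def)
      show "\<And>l. l \<in> {1,2,3} \<Longrightarrow> AE y in lborel. emeasure lborel (Pair y -` G l) \<le> ennreal (2 * a l) * indicator (S l) y"
        using F by blast
    qed (use ij mn in auto)
    also have "\<dots> = ennreal (4 * (a i * a j) * (b m * b n))"
      using F[OF mn(1)] F[OF mn(2)] F[OF ij(1)] F[OF ij(2)]
      by (simp add: ennreal_mult[symmetric] mult_ac)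
    finally show ?thesis .
  qed
  obtain p q where pq: "p \<in> {1,2,3}" "q \<in> {1,2,3}" "p \<noteq> q"
    and MA: "Min {2 powr (- \<bar>real_of_int (k m - k n)\<bar> / 3) | m n. m \<in> {1,2,3} \<and> n \<in> {1,2,3} \<and> m \<noteq> n}
       = 2 powr (- \<bar>real_of_int (k p - k q)\<bar> / 3)"
    using Min_pairs[of "\<lambda>m n. 2 powr (- \<bar>real_of_int (k m - k n)\<bar> / 3)"] by blast
  obtain p' q' where pq': "p' \<in> {1,2,3}" "q' \<in> {1,2,3}" "p' \<noteq> q'"
    and MB: "Min {(measure lebesgue (layer' (E \<mu>) (k \<mu>)) / measure lebesgue (layer' (E \<nu>) (k \<nu>))) powr (1/3)
                   | \<mu> \<nu>. \<mu> \<in> {1,2,3} \<and> \<nu> \<in> {1,2,3} \<and> \<mu> \<noteq> \<nu>}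
       = (b p' / b q') powr (1/3)"
    using Min_pairs[of "\<lambda>m n. (measure lebesgue (layer' (E m) (k m)) / measure lebesgue (layer' (E n) (k n))) powr (1/3)"]
    unfolding b_def by blast
  define u where "u = (if k p \<le> k q then p else q)"
  define v where "v = (if k p \<le> k q then q else p)"
  have uv: "u \<in> {1,2,3}" "v \<in> {1,2,3}" using pq unfolding u_def v_def by auto
  have thA: "2 powr (- \<bar>real_of_int (k p - k q)\<bar> / 3) = (a u / a v) powr (1/3)"
  proof -
    have "a u / a v = 2 powr (real_of_int (k u) - real_of_int (k v))" unfolding a_def by (simp add: powr_diff)
    also have "real_of_int (k u) - real_of_int (k v) = - \<bar>real_of_int (k p - k q)\<bar>" unfolding u_def v_def by auto
    finally have "(a u / a v) powr (1/3) = (2 powr (- \<bar>real_of_int (k p - k q)\<bar>)) powr (1/3)" by simp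
    also have "\<dots> = 2 powr (- \<bar>real_of_int (k p - k q)\<bar> / 3)" by (simp add: powr_powr)
    finally show ?thesis by simp
  qed
  have apos: "\<And>l. l \<in> {1,2,3} \<Longrightarrow> a l > 0" using F by blast
  have bpos: "\<And>l. l \<in> {1,2,3} \<Longrightarrow> b l > 0" using F by blast
  obtain i j where ij: "i \<in> {1,2,3}" "j \<in> {1,2,3}" "i \<noteq> j"
    and ai: "a i * a j \<le> (a u / a v) powr (1/3) * (a 1 * a 2 * a 3) powr (2/3)"
    using alg_pos[of a, OF apos uv] by blast
  obtain m n where mn: "m \<in> {1,2,3}" "n \<in> {1,2,3}" "m \<noteq> n"
    and bi: "b m * b n \<le> (b p' / b q') powr (1/3) * (b 1 * b 2 * b 3) powr (2/3)"
    using alg_pos[of b, OF bpos pq'(1,2)] by blast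
  define TA where "TA = (a u / a v) powr (1/3)"
  define TB where "TB = (b p' / b q') powr (1/3)"
  have a123: "a 1 > 0" "a 2 > 0" "a 3 > 0" "b 1 > 0" "b 2 > 0" "b 3 > 0" using apos bpos by auto
  have m123: "a 1 * b 1 \<le> mm 1" "a 2 * b 2 \<le> mm 2" "a 3 * b 3 \<le> mm 3" using F[of 1] F[of 2] F[of 3] by auto
  have "(a i * a j) * (b m * b n) \<le> (TA * (a 1 * a 2 * a 3) powr (2/3)) * (TB * (b 1 * b 2 * b 3) powr (2/3))"
    unfolding TA_def TB_def
  proof (rule mult_mono[OF ai bi])
    show "0 \<le> (a u / a v) powr (1 / 3) * (a 1 * a 2 * a 3) powr (2 / 3)" by simp
    show "0 \<le> b m * b n" using bpos[OF mn(1)] bpos[OF mn(2)] by simp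
  qed
  also have "\<dots> = TA * TB * ((a 1 * b 1) * (a 2 * b 2) * (a 3 * b 3)) powr (2/3)"
    using a123 by (simp add: powr_mult[symmetric] mult_ac)
  also have "\<dots> \<le> TA * TB * (mm 1 * mm 2 * mm 3) powr (2/3)"
  proof -
    have "mm 1 \<ge> 0" "mm 2 \<ge> 0" "mm 3 \<ge> 0" by (simp_all add: mm_def)
    then show ?thesis using a123 m123 unfolding TA_def TB_def
      by (intro mult_left_mono powr_mono2 mult_mono) auto
  qed
  also have "\<dots> = TA * TB * (\<Prod>j\<in>{1,2,3}. mm j powr (2/3))"
  proof -
    have "mm 1 \<ge> 0" "mm 2 \<ge> 0" "mm 3 \<ge> 0" by (simp_all add: mm_def)
    then show ?thesis by (simp add: powr_mult mult_ac)
  qed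
  finally have real_ineq: "4 * (a i * a j) * (b m * b n) \<le> 4 * (TA * TB) * (\<Prod>j\<in>{1,2,3}. mm j powr (2/3))"
    by simp
  have "trilin (layer (E 1) (k 1)) (layer (E 2) (k 2)) (layer (E 3) (k 3)) \<le> ennreal (4 * (a i * a j) * (b m * b n))"
    by (rule bound[OF ij mn])
  also have "\<dots> \<le> ennreal (4 * (TA * TB) * (\<Prod>j\<in>{1,2,3}. mm j powr (2/3)))"
    using real_ineq by (rule ennreal_leI)
  finally show "trilin (layer (E 1) (k 1)) (layer (E 2) (k 2)) (layer (E 3) (k 3))
       \<le> ennreal (4 *
           (Min {2 powr (- \<bar>real_of_int (k m - k n)\<bar> / 3) | m n. m \<in> {1,2,3} \<and> n \<in> {1,2,3} \<and> m \<noteq> n}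
            * Min {(measure lebesgue (layer' (E \<mu>) (k \<mu>)) / measure lebesgue (layer' (E \<nu>) (k \<nu>))) powr (1/3)
                   | \<mu> \<nu>. \<mu> \<in> {1,2,3} \<and> \<nu> \<in> {1,2,3} \<and> \<mu> \<noteq> \<nu>})
           * (\<Prod>j\<in>{1,2,3}. measure lebesgue (layer (E j) (k j)) powr (2/3)))"
    unfolding MA MB thA TA_def[symmetric] TB_def[symmetric] mm_def[symmetric] .
qed

end
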